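(* Let $n\ge 2$, $1\le n_1\le n-1$, $n_2=n-n_1$, and let $\xi_1,\dots,\xi_n$ be an orthonormal basis of $\mathbb{C}^n$. Let $\Pi_1$ be the orthogonal projection onto $\mathrm{span}\{\xi_1,\dots,\xi_{n_1}\}$ and $\Pi_2$ the orthogonal projection onto $\mathrm{span}\{\xi_{n_1+1},\dots,\xi_n\}$. Let $U$ be an $n\times n$ unitary matrix, $B_1=\Pi_1U$, $B_2=\Pi_2U$, and assume $\{B_1,B_2\}$ is unital, i.e. $B_1B_1^*+B_2B_2^*=I$. Let $0\le p\le 1$, $q=1-p$, and for $k,k'\in\mathbb{R}$ put $\omega_k=e^{ik}$, $B_{1k}=\overline{\omega}_kB_1$, $B_{2k}=\omega_kB_2$, $U_k=B_{1k}+B_{2k}$, and define the linear map $\mathcal{L}_{k,k'}$ on $n\times n$ complex matrices by $$\mathcal{L}_{k,k'}(\rho)=p\left(B_{1k}\rho B_{1k'}^*+B_{2k}\rho B_{2k'}^*\right)+qU_k\rho U_{k'}^*.$$ Let $\gamma_1=\frac{1}{\sqrt n}I$, for $2\le l\le n$ let $\gamma_l=\frac{1}{\sqrt{l(l-1)}}\,\mathrm{diag}(1,\dots,1,-(l-1),0,\dots,0)$ (with $l-1$ entries equal to $1$), and for $k\ne j$ let $\gamma_{k,j}$ be the normalized off-diagonal generalized Gell-Mann matrices (the normalization of $E_{kj}+E_{jk}$ for $k<j$ and of $-i(E_{jk}-E_{kj})$ for $k>j$, where $E_{kj}$ is the matrix unit in the basis $\xi_1,\dots,\xi_n$). Use the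 Hilbert–Schmidt inner product $\langle X,Y\rangle=\mathrm{Tr}(X^*Y)$ and write $\omega_\nu=e^{i\nu}$. Then for all $k,\nu\in\mathbb{R}$: (1) $\langle \gamma_{k,j},\mathcal{L}_{k,k+\nu}(\gamma_1)\rangle=0$ for all $k\ne j$; (2) $\langle\gamma_1,\mathcal{L}_{k,k+\nu}(\gamma_1)\rangle=\frac{2n_2\cos\nu}{n}+\frac{n_1-n_2}{n}\omega_\nu$; $\langle\gamma_l,\mathcal{L}_{k,k+\nu}(\gamma_1)\rangle=0$ for $2\le l\le n_1$; and $\langle\gamma_l,\mathcal{L}_{k,k+\nu}(\gamma_1)\rangle=\frac{2n_1 i\sin\nu}{\sqrt{n(l-1)l}}$ for $n_1+1\le l\le n$; (3) for every element $\gamma$ of this normalized basis, $\langle\gamma_1,\mathcal{L}_{k,k+\nu}(\gamma)\rangle=\omega_\nu\,\delta_{\gamma\gamma_1}-2i\sin\nu\,\frac{1}{\sqrt n}\mathrm{Tr}(B_2\gamma B_2^* )$. In particular, for $\nu=0$, the matrix of $\mathcal{L}_{k,k}$ with respect to this basis (ordered with $\gamma_1$ first) has first row and first column both equal to $(1,0,\dots,0)$.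
   Context: The basis $\{\gamma_1,\dots,\gamma_n\}\cup\{\gamma_{k,j}:k\neq j\}$ is the generalized Gell-Mann basis normalized to be orthonormal for the Hilbert–Schmidt inner product on $n\times n$ complex matrices. The map $\mathcal{L}_{k,k'}$ is the Fourier-transformed one-step superoperator of a partially open quantum random walk on $\mathbb{Z}$ with decoherence parameter $p$ (right moves governed by $B_1$, left moves by $B_2$). *)

theory Defs
  imports Complex_Main "Jordan_Normal_Form.Matrix"
begin

definition adj :: "complex mat \<Rightarrow> complex mat" where
  "adj A = mat (dim_col A) (dim_row A) (\<lambda>(i,j). cnj (A $$ (j,i)))"

definition tr :: "complex mat \<Rightarrow> complex" where
  "tr A = (\<Sum>i<dim_row A. A $$ (i,i))"

definition hs :: "complex mat \<Rightarrow> complex mat \<Rightarrow> complex" where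
  "hs X Y = tr (adj X * Y)"

definition unitary_mat :: "nat \<Rightarrow> complex mat \<Rightarrow> bool" where
  "unitary_mat n U \<longleftrightarrow> U \<in> carrier_mat n n \<and> U * adj U = 1\<^sub>m n \<and> adj U * U = 1\<^sub>m n"

(* xi 1, ..., xi n is an orthonormal basis of C^n (indices 1-based as in the paper) *)
definition orthonormal_basis :: "nat \<Rightarrow> (nat \<Rightarrow> complex vec) \<Rightarrow> bool" where
  "orthonormal_basis n xi \<longleftrightarrow>
     (\<forall>i\<in>{1..n}. xi i \<in> carrier_vec n) \<and>
     (\<forall>i\<in>{1..n}. \<forall>j\<in>{1..n}. (\<Sum>a<n. cnj (xi i $ a) * xi j $ a) = (if i = j then 1 else 0))"

definition Eunit :: "nat \<Rightarrow> (nat \<Rightarrow> complex vec) \<Rightarrow> nat \<Rightarrow> nat \<Rightarrow> complex mat" where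
  "Eunit n xi k j = mat n n (\<lambda>(a,b). xi k $ a * cnj (xi j $ b))"

definition diag_in :: "nat \<Rightarrow> (nat \<Rightarrow> complex vec) \<Rightarrow> (nat \<Rightarrow> complex) \<Rightarrow> complex mat" where
  "diag_in n xi c = mat n n (\<lambda>(a,b). \<Sum>i\<in>{1..n}. c i * (xi i $ a * cnj (xi i $ b)))"

definition proj_span :: "nat \<Rightarrow> (nat \<Rightarrow> complex vec) \<Rightarrow> nat \<Rightarrow> nat \<Rightarrow> complex mat" where
  "proj_span n xi lo hi = mat n n (\<lambda>(a,b). \<Sum>i\<in>{lo..hi}. xi i $ a * cnj (xi i $ b))"

definition gm1 :: "nat \<Rightarrow> complex mat" where
  "gm1 n = complex_of_real (1 / sqrt (real n)) \<cdot>\<^sub>m 1\<^sub>m n"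

definition gmdiag :: "nat \<Rightarrow> (nat \<Rightarrow> complex vec) \<Rightarrow> nat \<Rightarrow> complex mat" where
  "gmdiag n xi l = complex_of_real (1 / sqrt (real (l * (l - 1)))) \<cdot>\<^sub>m
     diag_in n xi (\<lambda>i. if i < l then 1 else if i = l then - of_nat (l - 1) else 0)"

definition gmoff :: "nat \<Rightarrow> (nat \<Rightarrow> complex vec) \<Rightarrow> nat \<Rightarrow> nat \<Rightarrow> complex mat" where
  "gmoff n xi k j =
     (if k < j then complex_of_real (1 / sqrt 2) \<cdot>\<^sub>m (Eunit n xi k j + Eunit n xi j k)
      else complex_of_real (1 / sqrt 2) \<cdot>\<^sub>m ((- \<i>) \<cdot>\<^sub>m (Eunit n xi j k - Eunit n xi k j)))"

definition omega :: "real \<Rightarrow> complex" where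
  "omega k = exp (\<i> * complex_of_real k)"

definition Lmap :: "real \<Rightarrow> complex mat \<Rightarrow> complex mat \<Rightarrow> real \<Rightarrow> real \<Rightarrow> complex mat \<Rightarrow> complex mat" where
  "Lmap p B1 B2 k k' \<rho> =
     (let B1k = cnj (omega k) \<cdot>\<^sub>m B1; B2k = omega k \<cdot>\<^sub>m B2;
          B1k' = cnj (omega k') \<cdot>\<^sub>m B1; B2k' = omega k' \<cdot>\<^sub>m B2;
          Uk = B1k + B2k; Uk' = B1k' + B2k'; q = 1 - p
      in complex_of_real p \<cdot>\<^sub>m (B1k * \<rho> * adj B1k' + B2k * \<rho> * adj B2k')
         + complex_of_real q \<cdot>\<^sub>m (Uk * \<rho> * adj Uk'))"

end

theory Submission
  imports Defs
begin


lemma mult_entry: "A \<in> carrier_mat n m \<Longrightarrow> B \<in> carrier_mat m c \<Longrightarrow> i < n \<Longrightarrow> j < c \<Longrightarrow>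
  (A * B) $$ (i,j) = (\<Sum>t<m. A $$ (i,t) * B $$ (t,j))"
  by (auto simp: scalar_prod_def lessThan_atLeast0 intro!: sum.cong)

lemma adj_carrier[simp]: "A \<in> carrier_mat r c \<Longrightarrow> adj A \<in> carrier_mat c r"
  by (auto simp: adj_def)
lemma adj_dims[simp]: "dim_row (adj A) = dim_col A" "dim_col (adj A) = dim_row A"
  by (auto simp: adj_def)
lemma adj_entry[simp]: "i < dim_col A \<Longrightarrow> j < dim_row A \<Longrightarrow> adj A $$ (i,j) = cnj (A $$ (j,i))"
  by (auto simp: adj_def)

lemma adj_mult: assumes "A \<in> carrier_mat r m" "B \<in> carrier_mat m c"
  shows "adj (A * B) = adj B * adj A"
proof (rule eq_matI)
  fix i j assume ij: "i < dim_row (adj B * adj A)" "j < dim_col (adj B * adj A)"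
  have "adj (A * B) $$ (i,j) = cnj (\<Sum>t<m. A $$ (j,t) * B $$ (t,i))"
    using assms ij by (simp del: index_mult_mat(1) add: mult_entry[of A r m B c])
  also have "\<dots> = (\<Sum>t<m. adj B $$ (i,t) * adj A $$ (t,j))"
    using assms ij by (auto simp: mult.commute intro!: sum.cong)
  also have "\<dots> = (adj B * adj A) $$ (i,j)"
    using assms ij by (simp del: index_mult_mat(1) add: mult_entry[of "adj B" c m "adj A" r])
  finally show "adj (A * B) $$ (i,j) = (adj B * adj A) $$ (i,j)" .
qed (use assms in auto)

lemma adj_smult: "adj (a \<cdot>\<^sub>m A) = cnj a \<cdot>\<^sub>m adj A"
  by (intro eq_matI) auto
lemma adj_add: "A \<in> carrier_mat r c \<Longrightarrow> B \<in> carrier_mat r c \<Longrightarrow> adj (A + B) = adj A + adj B"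
  by (intro eq_matI) auto
lemma adj_one[simp]: "adj (1\<^sub>m n) = 1\<^sub>m n"
  by (intro eq_matI) auto

lemma tr_add: "A \<in> carrier_mat n n \<Longrightarrow> B \<in> carrier_mat n n \<Longrightarrow> tr (A + B) = tr A + tr B"
  by (auto simp: tr_def sum.distrib)
lemma tr_smult: "A \<in> carrier_mat n n \<Longrightarrow> tr (a \<cdot>\<^sub>m A) = a * tr A"
  by (auto simp: tr_def sum_distrib_left intro!: sum.cong)
lemma tr_zero[simp]: "tr (0\<^sub>m n n) = 0"
  by (auto simp: tr_def)
lemma tr_comm: assumes "A \<in> carrier_mat n m" "B \<in> carrier_mat m n"
  shows "tr (A * B) = tr (B * A)"
proof -
  have "tr (A * B) = (\<Sum>i<n. \<Sum>t<m. A $$ (i,t) * B $$ (t,i))"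
    using assms by (auto simp del: index_mult_mat(1) simp: tr_def mult_entry[of _ _ m] mult_entry[of _ _ n] intro!: sum.cong)
  also have "\<dots> = (\<Sum>t<m. \<Sum>i<n. B $$ (t,i) * A $$ (i,t))"
    by (subst sum.swap) (simp add: mult.commute)
  also have "\<dots> = tr (B * A)"
    using assms by (auto simp del: index_mult_mat(1) simp: tr_def mult_entry[of _ _ m] mult_entry[of _ _ n] intro!: sum.cong)
  finally show ?thesis .
qed



definition Pset :: "nat \<Rightarrow> (nat \<Rightarrow> complex vec) \<Rightarrow> nat set \<Rightarrow> complex mat" where
  "Pset n xi S = mat n n (\<lambda>(a,b). \<Sum>i\<in>S. xi i $ a * cnj (xi i $ b))"

lemma proj_span_Pset: "proj_span n xi lo hi = Pset n xi {lo..hi}"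
  by (simp add: proj_span_def Pset_def)

lemma Pset_carrier[simp]: "Pset n xi S \<in> carrier_mat n n"
  by (simp add: Pset_def)

lemma ip_xi: "orthonormal_basis n xi \<Longrightarrow> i \<in> {1..n} \<Longrightarrow> j \<in> {1..n} \<Longrightarrow>
   (\<Sum>a<n. cnj (xi i $ a) * xi j $ a) = (if i = j then 1 else 0)"
  by (simp add: orthonormal_basis_def)

lemma adj_Pset: "adj (Pset n xi S) = Pset n xi S"
  by (intro eq_matI) (auto simp: Pset_def mult.commute)

lemma Pset_mult:
  assumes ob: "orthonormal_basis n xi" and S: "S \<subseteq> {1..n}" and T: "T \<subseteq> {1..n}"
  shows "Pset n xi S * Pset n xi T = Pset n xi (S \<inter> T)"
proof (rule eq_matI)
  fix a b assume ab: "a < dim_row (Pset n xi (S \<inter> T))" "b < dim_col (Pset n xi (S \<inter> T))"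
  hence ab': "a < n" "b < n" by (auto simp: Pset_def)
  have fS: "finite S" "finite T" using S T finite_subset by auto
  have "(Pset n xi S * Pset n xi T) $$ (a,b)
      = (\<Sum>y<n. (\<Sum>i\<in>S. xi i $ a * cnj (xi i $ y)) * (\<Sum>j\<in>T. xi j $ y * cnj (xi j $ b)))"
    using ab' by (simp del: index_mult_mat(1) add: mult_entry[of _ n n _ n] Pset_def)
  also have "\<dots> = (\<Sum>i\<in>S. \<Sum>j\<in>T. xi i $ a * cnj (xi j $ b) * (\<Sum>y<n. cnj (xi i $ y) * xi j $ y))"
    by (simp add: sum_distrib_left sum_distrib_right sum.swap[of _ "{..<n}"] algebra_simps)
  also have "\<dots> = (\<Sum>i\<in>S. \<Sum>j\<in>T. if i = j then xi i $ a * cnj (xi j $ b) else 0)"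
    using S T by (intro sum.cong refl) (simp add: ip_xi[OF ob] subset_iff)
  also have "\<dots> = (\<Sum>i\<in>S. if i \<in> T then xi i $ a * cnj (xi i $ b) else 0)"
    using fS by (intro sum.cong refl) (simp add: sum.delta)
  also have "\<dots> = (\<Sum>i\<in>S \<inter> T. xi i $ a * cnj (xi i $ b))"
    using fS by (simp add: sum.inter_restrict)
  also have "\<dots> = Pset n xi (S \<inter> T) $$ (a,b)" using ab' by (simp add: Pset_def)
  finally show "(Pset n xi S * Pset n xi T) $$ (a,b) = Pset n xi (S \<inter> T) $$ (a,b)" .
qed (auto simp: Pset_def)

lemma sum3_swap: "(\<Sum>x\<in>A. \<Sum>y\<in>B. \<Sum>j\<in>C. f x y j) = (\<Sum>j\<in>C. \<Sum>y\<in>B. \<Sum>x\<in>A. f x y j)"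
proof -
  have "(\<Sum>x\<in>A. \<Sum>y\<in>B. \<Sum>j\<in>C. f x y j) = (\<Sum>x\<in>A. \<Sum>j\<in>C. \<Sum>y\<in>B. f x y j)"
    by (rule sum.cong[OF refl], rule sum.swap)
  also have "\<dots> = (\<Sum>j\<in>C. \<Sum>x\<in>A. \<Sum>y\<in>B. f x y j)" by (rule sum.swap)
  also have "\<dots> = (\<Sum>j\<in>C. \<Sum>y\<in>B. \<Sum>x\<in>A. f x y j)" by (rule sum.cong[OF refl], rule sum.swap)
  finally show ?thesis .
qed

definition qf :: "nat \<Rightarrow> (nat \<Rightarrow> complex vec) \<Rightarrow> nat \<Rightarrow> complex mat \<Rightarrow> complex" where
  "qf n xi i Y = (\<Sum>x<n. \<Sum>y<n. cnj (xi i $ x) * Y $$ (x,y) * xi i $ y)"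

lemma tr_Pset: assumes Y: "Y \<in> carrier_mat n n" and S: "finite S"
  shows "tr (Y * Pset n xi S) = (\<Sum>i\<in>S. qf n xi i Y)"
proof -
  have "tr (Y * Pset n xi S) = (\<Sum>x<n. \<Sum>y<n. Y $$ (x,y) * (\<Sum>i\<in>S. xi i $ y * cnj (xi i $ x)))"
    using Y by (auto simp del: index_mult_mat(1) simp: tr_def mult_entry[of _ n n _ n] Pset_def intro!: sum.cong)
  also have "\<dots> = (\<Sum>i\<in>S. qf n xi i Y)"
    unfolding qf_def by (simp add: sum_distrib_left sum.swap[of _ S] algebra_simps)
  finally show ?thesis .
qed

lemma qf_adj: "Y \<in> carrier_mat n n \<Longrightarrow> qf n xi i (adj Y) = cnj (qf n xi i Y)"
  unfolding qf_def by (subst sum.swap) (auto simp: mult.commute mult.left_commute intro!: sum.cong)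

lemma qf_smult: "Y \<in> carrier_mat n n \<Longrightarrow> qf n xi i (c \<cdot>\<^sub>m Y) = c * qf n xi i Y"
  unfolding qf_def by (auto simp: sum_distrib_left algebra_simps intro!: sum.cong)

lemma qf_add: "Y \<in> carrier_mat n n \<Longrightarrow> Z \<in> carrier_mat n n \<Longrightarrow> qf n xi i (Y + Z) = qf n xi i Y + qf n xi i Z"
  unfolding qf_def by (auto simp: sum.distrib algebra_simps intro!: sum.cong)

lemma qf_minus: "Y \<in> carrier_mat n n \<Longrightarrow> Z \<in> carrier_mat n n \<Longrightarrow> qf n xi i (Y - Z) = qf n xi i Y - qf n xi i Z"
  unfolding qf_def by (auto simp: sum_subtractf algebra_simps intro!: sum.cong)

lemma qf_Eunit: assumes ob: "orthonormal_basis n xi" and "i \<in> {1..n}" "a \<in> {1..n}" "b \<in> {1..n}"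
  shows "qf n xi i (Eunit n xi a b) = (if i = a \<and> i = b then 1 else 0)"
proof -
  have "qf n xi i (Eunit n xi a b) = (\<Sum>x<n. cnj (xi i $ x) * xi a $ x) * (\<Sum>y<n. cnj (xi b $ y) * xi i $ y)"
    unfolding qf_def Eunit_def by (auto simp: sum_product algebra_simps intro!: sum.cong)
  thus ?thesis using assms by (simp add: ip_xi)
qed

lemma qf_diag: assumes ob: "orthonormal_basis n xi" and i: "i \<in> {1..n}"
  shows "qf n xi i (diag_in n xi c) = c i"
proof -
  have "qf n xi i (diag_in n xi c) = (\<Sum>j\<in>{1..n}. c j * ((\<Sum>x<n. cnj (xi i $ x) * xi j $ x) * (\<Sum>y<n. cnj (xi j $ y) * xi i $ y)))"
    unfolding qf_def diag_in_def
    by (simp add: sum_product sum_distrib_left sum_distrib_right algebra_simps) (rule sum3_swap)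
  also have "\<dots> = (\<Sum>j\<in>{1..n}. if j = i then c i else 0)"
    using i by (intro sum.cong refl) (auto simp: ip_xi[OF ob])
  finally show ?thesis using i by simp
qed

lemma qf_one: assumes ob: "orthonormal_basis n xi" and i: "i \<in> {1..n}"
  shows "qf n xi i (1\<^sub>m n) = 1"
proof -
  have "qf n xi i (1\<^sub>m n) = (\<Sum>x<n. cnj (xi i $ x) * xi i $ x)"
    unfolding qf_def by (auto intro!: sum.cong simp: if_distrib if_distribR sum.delta cong: if_cong)
  thus ?thesis using ip_xi[OF ob i i] by simp
qed



lemma tr_lin_add: "Y \<in> carrier_mat n n \<Longrightarrow> A \<in> carrier_mat n n \<Longrightarrow> B \<in> carrier_mat n n \<Longrightarrow>
  tr (Y * (A + B)) = tr (Y * A) + tr (Y * B)"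
  by (simp add: mult_add_distrib_mat[of Y n n] tr_add[of _ n])

lemma tr_lin_smult: "Y \<in> carrier_mat n n \<Longrightarrow> A \<in> carrier_mat n n \<Longrightarrow>
  tr (Y * (c \<cdot>\<^sub>m A)) = c * tr (Y * A)"
  by (simp add: mult_smult_distrib[of Y n n] tr_smult[of _ n])

lemma smult_smult_mat': "a \<cdot>\<^sub>m (b \<cdot>\<^sub>m A) = (a * b :: complex) \<cdot>\<^sub>m A"
  by (intro eq_matI) auto

lemma smult3: fixes A R C :: "complex mat"
  assumes A: "A \<in> carrier_mat n n" and R: "R \<in> carrier_mat n n" and C: "C \<in> carrier_mat n n"
  shows "(c \<cdot>\<^sub>m A) * R * (d \<cdot>\<^sub>m C) = (c * d) \<cdot>\<^sub>m (A * R * C)"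
proof -
  have AR: "A * R \<in> carrier_mat n n" using A R by simp
  have "(c \<cdot>\<^sub>m A) * R * (d \<cdot>\<^sub>m C) = (c \<cdot>\<^sub>m (A * R)) * (d \<cdot>\<^sub>m C)"
    by (simp only: mult_smult_assoc_mat[OF A R])
  also have "\<dots> = c \<cdot>\<^sub>m ((A * R) * (d \<cdot>\<^sub>m C))"
    by (rule mult_smult_assoc_mat[OF AR smult_carrier_mat[OF C]])
  also have "\<dots> = c \<cdot>\<^sub>m (d \<cdot>\<^sub>m ((A * R) * C))"
    by (simp only: mult_smult_distrib[OF AR C])
  finally show ?thesis by (simp add: smult_smult_mat')
qed

lemma distrib3: "A1 \<in> carrier_mat n n \<Longrightarrow> A2 \<in> carrier_mat n n \<Longrightarrow> R \<in> carrier_mat n n \<Longrightarrow>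
  C1 \<in> carrier_mat n n \<Longrightarrow> C2 \<in> carrier_mat n n \<Longrightarrow>
  (A1 + A2) * R * (C1 + C2) = (A1 * R * C1 + A2 * R * C1) + (A1 * R * C2 + A2 * R * C2)"
  by (simp add: add_mult_distrib_mat[of _ n n] mult_add_distrib_mat[of _ n n])

definition T3 :: "complex mat \<Rightarrow> complex mat \<Rightarrow> complex mat \<Rightarrow> complex mat \<Rightarrow> complex" where
  "T3 X A R C = tr (adj X * (A * R * adj C))"

lemma hs_Lmap:
  assumes X: "X \<in> carrier_mat n n" and R: "R \<in> carrier_mat n n"
    and B1: "B1 \<in> carrier_mat n n" and B2: "B2 \<in> carrier_mat n n"
  shows "hs X (Lmap p B1 B2 k k' R) =
     cnj (omega k) * omega k' * T3 X B1 R B1 + omega k * cnj (omega k') * T3 X B2 R B2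
     + (1 - p) * (cnj (omega k) * cnj (omega k') * T3 X B1 R B2 + omega k * omega k' * T3 X B2 R B1)"
proof -
  let ?a = "omega k" and ?b = "omega k'" and ?Y = "adj X"
  have Y: "?Y \<in> carrier_mat n n" using X by simp
  have aB1: "adj B1 \<in> carrier_mat n n" "adj B2 \<in> carrier_mat n n" using B1 B2 by auto
  have adjU: "adj (cnj ?b \<cdot>\<^sub>m B1 + ?b \<cdot>\<^sub>m B2) = ?b \<cdot>\<^sub>m adj B1 + cnj ?b \<cdot>\<^sub>m adj B2"
    using B1 B2 by (simp add: adj_add[of _ n n] adj_smult)
  have M1: "(cnj ?a \<cdot>\<^sub>m B1) * R * adj (cnj ?b \<cdot>\<^sub>m B1) = (cnj ?a * ?b) \<cdot>\<^sub>m (B1 * R * adj B1)"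
    using B1 R aB1 by (simp add: adj_smult smult3[of _ n])
  have M2: "(?a \<cdot>\<^sub>m B2) * R * adj (?b \<cdot>\<^sub>m B2) = (?a * cnj ?b) \<cdot>\<^sub>m (B2 * R * adj B2)"
    using B2 R aB1 by (simp add: adj_smult smult3[of _ n])
  have M3: "(cnj ?a \<cdot>\<^sub>m B1 + ?a \<cdot>\<^sub>m B2) * R * adj (cnj ?b \<cdot>\<^sub>m B1 + ?b \<cdot>\<^sub>m B2)
     = ((cnj ?a * ?b) \<cdot>\<^sub>m (B1 * R * adj B1) + (?a * ?b) \<cdot>\<^sub>m (B2 * R * adj B1))
       + ((cnj ?a * cnj ?b) \<cdot>\<^sub>m (B1 * R * adj B2) + (?a * cnj ?b) \<cdot>\<^sub>m (B2 * R * adj B2))"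
    unfolding adjU using B1 B2 R aB1
    by (subst distrib3[of _ n]) (simp_all add: smult3[of _ n])
  have c: "B1 * R * adj B1 \<in> carrier_mat n n" "B1 * R * adj B2 \<in> carrier_mat n n"
     "B2 * R * adj B1 \<in> carrier_mat n n" "B2 * R * adj B2 \<in> carrier_mat n n"
    using B1 B2 R aB1 by auto
  show ?thesis
    unfolding hs_def Lmap_def Let_def M1 M2 M3 T3_def
    using Y c
    by (simp add: tr_lin_add[of _ n] tr_lin_smult[of _ n] algebra_simps)
qed



lemma carX: "dim_row X = n \<Longrightarrow> X \<in> carrier_mat n (dim_col X)"
  by (rule carrier_matI) auto

lemma assoc_fwd[simp]: "dim_col A = dim_row B \<Longrightarrow> dim_col B = dim_row C \<Longrightarrow> A * B * C = A * (B * C)"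
  by (rule assoc_mult_mat[of A "dim_row A" "dim_col A" B "dim_col B" C "dim_col C"])
     (auto intro: carrier_matI)

lemma Pset_empty: "Pset n xi {} = 0\<^sub>m n n"
  by (intro eq_matI) (auto simp: Pset_def)

lemma assoc_rule: "A * B = C \<Longrightarrow> A \<in> carrier_mat n n \<Longrightarrow> B \<in> carrier_mat n n \<Longrightarrow> X \<in> carrier_mat n m
  \<Longrightarrow> A * (B * X) = C * X"
  by (metis assoc_mult_mat)

definition "P1d n xi n1 = Pset n xi {1..n1}"
definition "P2d n xi n1 = Pset n xi {n1+1..n}"

definition cl :: "nat \<Rightarrow> nat \<Rightarrow> complex" where
  "cl l i = (if i < l then 1 else if i = l then - of_nat (l - 1) else 0)"

lemma cl_sum: "1 \<le> l \<Longrightarrow> (\<Sum>i\<in>{1..m}. cl l i) = (if l \<le> m then 0 else of_nat m)"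
proof (induction m)
  case 0 thus ?case by simp
next
  case (Suc m)
  have "(\<Sum>i\<in>{1..Suc m}. cl l i) = (\<Sum>i\<in>{1..m}. cl l i) + cl l (Suc m)"
    by simp
  thus ?case using Suc by (auto simp: cl_def of_nat_diff)
qed

lemma cnj_cl[simp]: "cnj (cl l i) = cl l i" by (simp add: cl_def)

lemma sum_split: fixes n n1 :: nat shows "n1 \<le> n \<Longrightarrow> (\<Sum>i\<in>{1..n}. f i) = (\<Sum>i\<in>{1..n1}. f i) + (\<Sum>i\<in>{n1+1..n}. f i)"
proof -
  assume h: "n1 \<le> n"
  have "{1..n} = {1..n1} \<union> {n1+1..n}" using h by auto
  moreover have "{1..n1} \<inter> {n1+1..n} = {}" by auto
  ultimately show ?thesis by (simp add: sum.union_disjoint)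
qed

lemma gmdiag_eq: "gmdiag n xi l = complex_of_real (1 / sqrt (real (l * (l - 1)))) \<cdot>\<^sub>m diag_in n xi (cl l)"
  by (simp add: gmdiag_def cl_def[abs_def])

lemma omega_cis: "omega x = cis x" by (simp add: omega_def cis_conv_exp)

lemma omega_prod: "cnj (omega k) * omega (k + v) = omega v" "omega k * cnj (omega (k + v)) = cnj (omega v)"
  by (simp_all add: omega_cis cis_cnj cis_mult)

lemma omega_parts: "omega v = Complex (cos v) (sin v)" "cnj (omega v) = Complex (cos v) (- sin v)"
  by (simp_all add: omega_cis cis.ctr complex_cnj)

context
  fixes n n1 :: nat and xi :: "nat \<Rightarrow> complex vec" and U B1 B2 :: "complex mat"
  assumes hn: "n \<ge> 2" and hn1: "1 \<le> n1" "n1 \<le> n - 1"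
    and hxi: "orthonormal_basis n xi"
    and hU: "unitary_mat n U"
    and hB1: "B1 = proj_span n xi 1 n1 * U"
    and hB2: "B2 = proj_span n xi (n1 + 1) n * U"
    and hunital: "B1 * adj B1 + B2 * adj B2 = 1\<^sub>m n"
begin

abbreviation "P1 \<equiv> P1d n xi n1"
abbreviation "P2 \<equiv> P2d n xi n1"

lemma P_car[simp]: "P1 \<in> carrier_mat n n" "P2 \<in> carrier_mat n n"
  "dim_row P1 = n" "dim_col P1 = n" "dim_row P2 = n" "dim_col P2 = n"
  by (auto simp: P1d_def P2d_def Pset_def)

lemma U_car[simp]: "U \<in> carrier_mat n n" "dim_row U = n" "dim_col U = n"
  using hU by (auto simp: unitary_mat_def)

lemma UU: "U * adj U = 1\<^sub>m n" "adj U * U = 1\<^sub>m n"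
  using hU by (auto simp: unitary_mat_def)

lemma UU1[simp]: "dim_row X = n \<Longrightarrow> U * (adj U * X) = X"
  "dim_row X = n \<Longrightarrow> adj U * (U * X) = X"
proof -
  assume X: "dim_row X = n"
  have "U * (adj U * X) = (U * adj U) * X"
    by (rule assoc_mult_mat[of U n n "adj U" n X "dim_col X", symmetric, OF U_car(1) adj_carrier[OF U_car(1)] carX[OF X]])
  thus "U * (adj U * X) = X" using X by (simp del: assoc_mult_mat add: UU)
next
  assume X: "dim_row X = n"
  have "adj U * (U * X) = (adj U * U) * X"
    by (rule assoc_mult_mat[of "adj U" n n U n X "dim_col X", symmetric, OF adj_carrier[OF U_car(1)] U_car(1) carX[OF X]])
  thus "adj U * (U * X) = X" using X by (simp del: assoc_mult_mat add: UU)
qed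

lemma sub1: "{1..n1} \<subseteq> {1..n}" "{n1+1..n} \<subseteq> {1..n}" using hn1 by auto

lemma PP[simp]: "P1 * P1 = P1" "P2 * P2 = P2" "P1 * P2 = 0\<^sub>m n n" "P2 * P1 = 0\<^sub>m n n"
  using Pset_mult[OF hxi sub1(1) sub1(1)] Pset_mult[OF hxi sub1(2) sub1(2)]
    Pset_mult[OF hxi sub1(1) sub1(2)] Pset_mult[OF hxi sub1(2) sub1(1)]
  by (auto simp: Pset_empty P1d_def P2d_def)

lemma assoc_back: "A \<in> carrier_mat n n \<Longrightarrow> B \<in> carrier_mat n n \<Longrightarrow> dim_row X = n \<Longrightarrow> A * (B * X) = (A * B) * X"
  by (rule assoc_mult_mat[of A n n B n X "dim_col X", symmetric, OF _ _ carX])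

lemma PPa[simp]: "dim_row X = n \<Longrightarrow> P1 * (P1 * X) = P1 * X"
  "dim_row X = n \<Longrightarrow> P2 * (P2 * X) = P2 * X"
  "dim_row X = n \<Longrightarrow> P1 * (P2 * X) = 0\<^sub>m n (dim_col X)"
  "dim_row X = n \<Longrightarrow> P2 * (P1 * X) = 0\<^sub>m n (dim_col X)"
  by (simp_all del: assoc_mult_mat add: assoc_back)

lemma hB1': "B1 = P1 * U" and hB2': "B2 = P2 * U"
  by (auto simp: hB1 hB2 proj_span_Pset P1d_def P2d_def)

lemma B_car[simp]: "B1 \<in> carrier_mat n n" "B2 \<in> carrier_mat n n"
  "dim_row B1 = n" "dim_col B1 = n" "dim_row B2 = n" "dim_col B2 = n"
  by (auto simp: hB1' hB2' Pset_def)

lemma adjB: "adj B1 = adj U * P1" "adj B2 = adj U * P2"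
  by (auto simp: hB1' hB2' adj_mult[of _ n n _ n] adj_Pset P1d_def P2d_def)

lemma BB[simp]: "B1 * adj B1 = P1" "B2 * adj B2 = P2" "B1 * adj B2 = 0\<^sub>m n n" "B2 * adj B1 = 0\<^sub>m n n"
  unfolding adjB by (auto simp: hB1' hB2')

lemma P12: "P1 + P2 = 1\<^sub>m n"
  using hunital by simp

lemma BBX: assumes X: "X \<in> carrier_mat n n"
  shows "adj B2 * (B1 * X) = 0\<^sub>m n n" "adj B1 * (B2 * X) = 0\<^sub>m n n"
    "adj B1 * (B1 * X) + adj B2 * (B2 * X) = X"
proof -
  show "adj B2 * (B1 * X) = 0\<^sub>m n n" "adj B1 * (B2 * X) = 0\<^sub>m n n"
    using X unfolding adjB by (auto simp: hB1' hB2')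
  have UX: "U * X \<in> carrier_mat n n" using mult_carrier_mat[OF U_car(1) X] .
  have "adj B1 * (B1 * X) + adj B2 * (B2 * X) = adj U * (P1 * (U * X)) + adj U * (P2 * (U * X))"
    using X unfolding adjB by (simp add: hB1' hB2')
  also have "\<dots> = adj U * (P1 * (U * X) + P2 * (U * X))"
    by (rule mult_add_distrib_mat[symmetric, of "adj U" n n]) (auto intro!: mult_carrier_mat UX X)
  also have "\<dots> = adj U * ((P1 + P2) * (U * X))"
    by (subst add_mult_distrib_mat[of _ n n]) (auto intro!: mult_carrier_mat UX X)
  also have "\<dots> = X" using X by (simp add: P12)
  finally show "adj B1 * (B1 * X) + adj B2 * (B2 * X) = X" .
qed


abbreviation "sn \<equiv> complex_of_real (1 / sqrt (real n))"

lemma Eunit_car[simp]: "Eunit n xi a b \<in> carrier_mat n n" by (simp add: Eunit_def)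
lemma Eunit_min_car[simp]: "Eunit n xi a b - Eunit n xi c d \<in> carrier_mat n n"
  by (rule minus_carrier_mat) simp
lemma diag_car[simp]: "diag_in n xi c \<in> carrier_mat n n" by (simp add: diag_in_def)
lemma gm_car[simp]: "gm1 n \<in> carrier_mat n n" "gmdiag n xi l \<in> carrier_mat n n" "gmoff n xi a b \<in> carrier_mat n n"
  by (auto simp: gm1_def gmdiag_def gmoff_def)

lemma T3_gm1: assumes X: "X \<in> carrier_mat n n" and A: "A \<in> carrier_mat n n" and C: "C \<in> carrier_mat n n"
  shows "T3 X A (gm1 n) C = sn * tr (adj X * (A * adj C))"
proof -
  have "A * gm1 n = sn \<cdot>\<^sub>m A"
    unfolding gm1_def using A by (simp add: mult_smult_distrib[of A n n "1\<^sub>m n" n])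
  hence "A * gm1 n * adj C = sn \<cdot>\<^sub>m (A * adj C)"
    using A C by (simp del: assoc_fwd add: mult_smult_assoc_mat[of A n n "adj C" n])
  thus ?thesis unfolding T3_def using X A C by (simp del: assoc_fwd add: tr_lin_smult[of _ n])
qed

lemma hsL_gm1: assumes X: "X \<in> carrier_mat n n"
  shows "hs X (Lmap p B1 B2 k (k + v) (gm1 n)) = sn * (omega v * tr (adj X * P1) + cnj (omega v) * tr (adj X * P2))"
  using X by (simp add: hs_Lmap[of X n] T3_gm1 omega_prod algebra_simps)

lemma T3_left_gm1: assumes A: "A \<in> carrier_mat n n" and R: "R \<in> carrier_mat n n" and C: "C \<in> carrier_mat n n"
  shows "T3 (gm1 n) A R C = sn * tr (adj C * (A * R))"
proof -
  have ag: "adj (gm1 n) = sn \<cdot>\<^sub>m 1\<^sub>m n" by (simp add: gm1_def adj_smult)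
  have M: "A * R * adj C \<in> carrier_mat n n" using A R C by (meson adj_carrier mult_carrier_mat)
  have "T3 (gm1 n) A R C = tr (sn \<cdot>\<^sub>m (A * R * adj C))"
    unfolding T3_def ag using M by (simp del: assoc_fwd add: mult_smult_assoc_mat[of _ n n _ n] left_mult_one_mat[OF M])
  also have "\<dots> = sn * tr (A * R * adj C)" using M by (simp del: assoc_fwd add: tr_smult[of _ n] left_mult_one_mat[OF M])
  also have "tr (A * R * adj C) = tr (adj C * (A * R))"
    by (rule tr_comm[of _ n n]) (use A R C in \<open>meson adj_carrier mult_carrier_mat\<close>)+
  finally show ?thesis .
qed

lemma omega_diff: "cnj (omega v) - omega v = - 2 * \<i> * complex_of_real (sin v)"
  by (simp add: omega_parts complex_eq_iff)

lemma hsgm1_L: assumes R: "R \<in> carrier_mat n n"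
  shows "hs (gm1 n) (Lmap p B1 B2 k (k + v) R) = sn * (omega v * tr R - 2 * \<i> * complex_of_real (sin v) * tr (B2 * R * adj B2))"
proof -
  have c: "B1 * R \<in> carrier_mat n n" "B2 * R \<in> carrier_mat n n" using R by (meson B_car mult_carrier_mat)+
  have z1: "T3 (gm1 n) B1 R B2 = 0" "T3 (gm1 n) B2 R B1 = 0"
    using R by (simp_all del: assoc_fwd add: T3_left_gm1 BBX)
  have s: "tr (adj B1 * (B1 * R)) + tr (adj B2 * (B2 * R)) = tr R"
  proof -
    have "tr (adj B1 * (B1 * R)) + tr (adj B2 * (B2 * R)) = tr (adj B1 * (B1 * R) + adj B2 * (B2 * R))"
      by (rule tr_add[symmetric, of _ n]) (use c in \<open>meson adj_carrier B_car mult_carrier_mat\<close>)+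
    thus ?thesis using BBX(3)[OF R] by simp
  qed
  have t2: "tr (B2 * R * adj B2) = tr (adj B2 * (B2 * R))"
    by (rule tr_comm[of _ n n]) (use c in auto)
  have "hs (gm1 n) (Lmap p B1 B2 k (k + v) R) = omega v * T3 (gm1 n) B1 R B1 + cnj (omega v) * T3 (gm1 n) B2 R B2"
    using R by (simp del: assoc_fwd add: hs_Lmap[of _ n] z1 omega_prod)
  also have "\<dots> = sn * (omega v * (tr R - tr (B2 * R * adj B2)) + cnj (omega v) * tr (B2 * R * adj B2))"
  proof -
    have s': "tr (adj B1 * (B1 * R)) = tr R - tr (B2 * R * adj B2)" using s t2 by (simp add: eq_diff_eq)
    show ?thesis using R by (simp del: assoc_fwd add: T3_left_gm1 s' t2[symmetric] algebra_simps)
  qed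
  also have "\<dots> = sn * (omega v * tr R + (cnj (omega v) - omega v) * tr (B2 * R * adj B2))"
    by (simp add: algebra_simps)
  finally show ?thesis by (simp add: omega_diff)
qed

lemma tr_decomp: assumes R: "R \<in> carrier_mat n n"
  shows "tr R = (\<Sum>i\<in>{1..n1}. qf n xi i R) + (\<Sum>i\<in>{n1+1..n}. qf n xi i R)"
proof -
  have "tr R = tr (R * (P1 + P2))" using R by (simp add: P12)
  also have "\<dots> = tr (R * P1) + tr (R * P2)" using R by (simp add: tr_lin_add[of _ n])
  finally show ?thesis using R by (simp add: P1d_def P2d_def tr_Pset)
qed

lemma tr_adjP: assumes X: "X \<in> carrier_mat n n"
  shows "tr (adj X * P1) = (\<Sum>i\<in>{1..n1}. cnj (qf n xi i X))"
    "tr (adj X * P2) = (\<Sum>i\<in>{n1+1..n}. cnj (qf n xi i X))"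
  using X by (simp_all add: P1d_def P2d_def tr_Pset qf_adj)

lemma qf_gm1: "i \<in> {1..n} \<Longrightarrow> qf n xi i (gm1 n) = sn"
  by (simp add: gm1_def qf_smult[of _ n] qf_one[OF hxi])

lemma qf_gmdiag: "i \<in> {1..n} \<Longrightarrow> qf n xi i (gmdiag n xi l) = complex_of_real (1 / sqrt (real (l * (l - 1)))) * cl l i"
  by (simp add: gmdiag_eq qf_smult[of _ n] qf_diag[OF hxi])

lemma qf_gmoff: "i \<in> {1..n} \<Longrightarrow> a \<in> {1..n} \<Longrightarrow> b \<in> {1..n} \<Longrightarrow> a \<noteq> b \<Longrightarrow> qf n xi i (gmoff n xi a b) = 0"
  by (auto simp: gmoff_def qf_smult[of _ n] qf_add[of _ n] qf_minus[of _ n] qf_Eunit[OF hxi])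


lemma ring_id: "(x::complex) * (a * (c * x) + b * (d * x)) = (x * x) * (a * c + b * d)"
  by (simp add: algebra_simps)

lemma ring_id2: "(x::complex) * (a * (y * c) + b * (y * d)) = x * y * (a * c + b * d)"
  by (simp add: algebra_simps)

lemma n1n: "n1 \<le> n" "1 \<le> n1" using hn1 hn by auto

lemma in12: "i \<in> {1..n1} \<Longrightarrow> i \<in> {1..n}" "i \<in> {n1+1..n} \<Longrightarrow> i \<in> {1..n}"
  using n1n(1) by (auto intro: order.trans[OF _ n1n(1)])

lemma sn_sq: "sn * sn = complex_of_real (1 / real n)"
proof -
  have "sqrt (real n) * sqrt (real n) = real n" by simp
  hence "(1 / sqrt (real n)) * (1 / sqrt (real n)) = 1 / real n" by (simp add: field_simps)
  thus ?thesis by (metis of_real_mult)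
qed

lemma cnj_sn[simp]: "cnj sn = sn" by simp

lemma sum_const_S: "(\<Sum>i\<in>{1..n1}. c) = of_nat n1 * c" "(\<Sum>i\<in>{n1+1..n}. c) = of_nat (n - n1) * c"
  by simp_all

lemma it1: assumes "a \<in> {1..n}" "b \<in> {1..n}" "a \<noteq> b"
  shows "hs (gmoff n xi a b) (Lmap p B1 B2 k (k + v) (gm1 n)) = 0"
proof -
  have "\<And>i. i \<in> {1..n1} \<Longrightarrow> qf n xi i (gmoff n xi a b) = 0" "\<And>i. i \<in> {n1+1..n} \<Longrightarrow> qf n xi i (gmoff n xi a b) = 0"
    using assms by (meson qf_gmoff in12)+
  thus ?thesis by (simp add: hsL_gm1 tr_adjP)
qed

lemma it2: "hs (gm1 n) (Lmap p B1 B2 k (k + v) (gm1 n))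
        = of_real (2 * real (n - n1) * cos v / real n) + of_real ((real n1 - real (n - n1)) / real n) * omega v"
proof -
  have "\<And>i. i \<in> {1..n1} \<Longrightarrow> qf n xi i (gm1 n) = sn" "\<And>i. i \<in> {n1+1..n} \<Longrightarrow> qf n xi i (gm1 n) = sn"
    by (rule qf_gm1, erule in12)+
  hence A: "tr (adj (gm1 n) * P1) = of_nat n1 * sn" and B: "tr (adj (gm1 n) * P2) = of_nat (n - n1) * sn"
    by (simp_all add: tr_adjP)
  have "hs (gm1 n) (Lmap p B1 B2 k (k + v) (gm1 n)) = (sn * sn) * (omega v * of_nat n1 + cnj (omega v) * of_nat (n - n1))"
    by (simp only: hsL_gm1[OF gm_car(1)] A B ring_id)
  also have "\<dots> = of_real (2 * real (n - n1) * cos v / real n) + of_real ((real n1 - real (n - n1)) / real n) * omega v"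
    unfolding sn_sq using hn by (simp add: omega_parts complex_eq_iff field_simps of_nat_diff)
  finally show ?thesis .
qed

lemma sum_cl2: assumes l: "1 \<le> l"
  shows "(\<Sum>i\<in>{n1+1..n}. cl l i) = (if l \<le> n then 0 else of_nat n) - (if l \<le> n1 then 0 else of_nat n1)"
proof -
  have e: "(\<Sum>i\<in>{n1+1..n}. cl l i) = (\<Sum>i\<in>{1..n}. cl l i) - (\<Sum>i\<in>{1..n1}. cl l i)"
    using sum_split[OF n1n(1), of "cl l"] by simp
  show ?thesis unfolding e cl_sum[OF l] ..
qed

lemma hs_diag: "hs (gmdiag n xi l) (Lmap p B1 B2 k (k + v) (gm1 n)) =
  sn * complex_of_real (1 / sqrt (real (l * (l - 1)))) * (omega v * (\<Sum>i\<in>{1..n1}. cl l i) + cnj (omega v) * (\<Sum>i\<in>{n1+1..n}. cl l i))"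
proof -
  have "\<And>i. i \<in> {1..n1} \<Longrightarrow> cnj (qf n xi i (gmdiag n xi l)) = complex_of_real (1 / sqrt (real (l * (l - 1)))) * cl l i"
       "\<And>i. i \<in> {n1+1..n} \<Longrightarrow> cnj (qf n xi i (gmdiag n xi l)) = complex_of_real (1 / sqrt (real (l * (l - 1)))) * cl l i"
  proof -
    fix i assume "i \<in> {1..n1}" hence "i \<in> {1..n}" by (rule in12)
    thus "cnj (qf n xi i (gmdiag n xi l)) = complex_of_real (1 / sqrt (real (l * (l - 1)))) * cl l i" by (simp add: qf_gmdiag)
  next
    fix i assume "i \<in> {n1+1..n}" hence "i \<in> {1..n}" by (rule in12)
    thus "cnj (qf n xi i (gmdiag n xi l)) = complex_of_real (1 / sqrt (real (l * (l - 1)))) * cl l i" by (simp add: qf_gmdiag)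
  qed
  hence A: "tr (adj (gmdiag n xi l) * P1) = complex_of_real (1 / sqrt (real (l * (l - 1)))) * (\<Sum>i\<in>{1..n1}. cl l i)"
    and B: "tr (adj (gmdiag n xi l) * P2) = complex_of_real (1 / sqrt (real (l * (l - 1)))) * (\<Sum>i\<in>{n1+1..n}. cl l i)"
    by (simp_all add: tr_adjP sum_divide_distrib)
  show ?thesis by (simp only: hsL_gm1[OF gm_car(2)] A B ring_id2)
qed

lemma it3: "l \<in> {2..n1} \<Longrightarrow> hs (gmdiag n xi l) (Lmap p B1 B2 k (k + v) (gm1 n)) = 0"
proof -
  assume l: "l \<in> {2..n1}"
  hence l1: "1 \<le> l" "l \<le> n1" "l \<le> n" using n1n(1) by auto
  have "(\<Sum>i\<in>{1..n1}. cl l i) = 0" using cl_sum[OF l1(1), of n1] l1 by simp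
  moreover have "(\<Sum>i\<in>{n1+1..n}. cl l i) = 0" using sum_cl2[OF l1(1)] l1 by simp
  ultimately show ?thesis by (simp only: hs_diag) simp
qed

lemma it4: "l \<in> {n1+1..n} \<Longrightarrow> hs (gmdiag n xi l) (Lmap p B1 B2 k (k + v) (gm1 n))
        = of_real (2 * real n1) * \<i> * of_real (sin v) / of_real (sqrt (real n * real (l - 1) * real l))"
proof -
  assume l: "l \<in> {n1+1..n}"
  hence l1: "1 \<le> l" "\<not> l \<le> n1" "l \<le> n" by auto
  have "hs (gmdiag n xi l) (Lmap p B1 B2 k (k + v) (gm1 n)) =
    sn * complex_of_real (1 / sqrt (real (l * (l - 1)))) * (omega v * of_nat n1 - cnj (omega v) * of_nat n1)"
  proof -
    have "(\<Sum>i\<in>{1..n1}. cl l i) = of_nat n1" using cl_sum[OF l1(1), of n1] l1 by simp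
    moreover have "(\<Sum>i\<in>{n1+1..n}. cl l i) = - of_nat n1" using sum_cl2[OF l1(1)] l1 by simp
    ultimately show ?thesis by (simp only: hs_diag) simp
  qed
  also have "sn * complex_of_real (1 / sqrt (real (l * (l - 1)))) = complex_of_real (1 / sqrt (real n * real (l - 1) * real l))"
    by (simp add: real_sqrt_mult mult.commute mult.left_commute)
  also have "omega v * of_nat n1 - cnj (omega v) * of_nat n1 = - (of_nat n1 * (cnj (omega v) - omega v))"
    by (simp add: algebra_simps)
  finally show ?thesis by (simp add: omega_diff field_simps)
qed

lemma tr_gm1: "sn * tr (gm1 n) = 1"
proof -
  have "\<And>i. i \<in> {1..n1} \<Longrightarrow> qf n xi i (gm1 n) = sn" "\<And>i. i \<in> {n1+1..n} \<Longrightarrow> qf n xi i (gm1 n) = sn"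
    by (rule qf_gm1, erule in12)+
  hence "tr (gm1 n) = of_nat n * sn"
    by (simp add: tr_decomp[of "gm1 n"] of_nat_diff[OF n1n(1)] diff_divide_distrib add_divide_distrib[symmetric])
  hence "sn * tr (gm1 n) = of_nat n * (sn * sn)" by (simp only: ac_simps)
  also have "\<dots> = complex_of_real (real n * (1 / real n))" by (simp only: sn_sq of_real_mult of_real_of_nat_eq)
  also have "real n * (1 / real n) = 1" using hn by simp
  finally show ?thesis by simp
qed

lemma tr_gmdiag: "l \<in> {2..n} \<Longrightarrow> tr (gmdiag n xi l) = 0"
proof -
  assume l: "l \<in> {2..n}"
  have "\<And>i. i \<in> {1..n1} \<Longrightarrow> qf n xi i (gmdiag n xi l) = complex_of_real (1 / sqrt (real (l * (l - 1)))) * cl l i"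
       "\<And>i. i \<in> {n1+1..n} \<Longrightarrow> qf n xi i (gmdiag n xi l) = complex_of_real (1 / sqrt (real (l * (l - 1)))) * cl l i"
  proof -
    fix i assume "i \<in> {1..n1}" hence "i \<in> {1..n}" by (rule in12)
    thus "qf n xi i (gmdiag n xi l) = complex_of_real (1 / sqrt (real (l * (l - 1)))) * cl l i" by (simp add: qf_gmdiag)
  next
    fix i assume "i \<in> {n1+1..n}" hence "i \<in> {1..n}" by (rule in12)
    thus "qf n xi i (gmdiag n xi l) = complex_of_real (1 / sqrt (real (l * (l - 1)))) * cl l i" by (simp add: qf_gmdiag)
  qed
  hence "tr (gmdiag n xi l) = complex_of_real (1 / sqrt (real (l * (l - 1)))) * ((\<Sum>i\<in>{1..n1}. cl l i) + (\<Sum>i\<in>{n1+1..n}. cl l i))"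
    by (simp add: tr_decomp[of "gmdiag n xi l"] sum_divide_distrib add_divide_distrib)
  also have "(\<Sum>i\<in>{1..n1}. cl l i) + (\<Sum>i\<in>{n1+1..n}. cl l i) = (\<Sum>i\<in>{1..n}. cl l i)"
    by (rule sum_split[symmetric]) (rule n1n(1))
  also have "\<dots> = 0" using l cl_sum[of l n] by simp
  finally show ?thesis by simp
qed

lemma tr_gmoff: assumes "a \<in> {1..n}" "b \<in> {1..n}" "a \<noteq> b" shows "tr (gmoff n xi a b) = 0"
proof -
  have "\<And>i. i \<in> {1..n1} \<Longrightarrow> qf n xi i (gmoff n xi a b) = 0" "\<And>i. i \<in> {n1+1..n} \<Longrightarrow> qf n xi i (gmoff n xi a b) = 0"
    using assms by (meson qf_gmoff in12)+
  thus ?thesis by (simp add: tr_decomp[of "gmoff n xi a b"])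
qed

lemma it5: "hs (gm1 n) (Lmap p B1 B2 k (k + v) (gm1 n))
        = omega v - 2 * \<i> * of_real (sin v) * of_real (1 / sqrt (real n)) * tr (B2 * gm1 n * adj B2)"
proof -
  have "hs (gm1 n) (Lmap p B1 B2 k (k + v) (gm1 n)) = omega v * (sn * tr (gm1 n)) - 2 * \<i> * of_real (sin v) * sn * tr (B2 * gm1 n * adj B2)"
    by (simp del: assoc_fwd add: hsgm1_L algebra_simps)
  thus ?thesis by (simp only: tr_gm1 mult_1_right)
qed

lemma it6: "l \<in> {2..n} \<Longrightarrow> hs (gm1 n) (Lmap p B1 B2 k (k + v) (gmdiag n xi l))
        = - 2 * \<i> * of_real (sin v) * of_real (1 / sqrt (real n)) * tr (B2 * gmdiag n xi l * adj B2)"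
  by (simp del: assoc_fwd add: hsgm1_L tr_gmdiag algebra_simps)

lemma it7: "a \<in> {1..n} \<Longrightarrow> b \<in> {1..n} \<Longrightarrow> a \<noteq> b \<Longrightarrow> hs (gm1 n) (Lmap p B1 B2 k (k + v) (gmoff n xi a b))
        = - 2 * \<i> * of_real (sin v) * of_real (1 / sqrt (real n)) * tr (B2 * gmoff n xi a b * adj B2)"
  by (simp del: assoc_fwd add: hsgm1_L tr_gmoff algebra_simps)

end

theorem mainTheorem1:
  fixes n n1 n2 :: nat and xi :: "nat \<Rightarrow> complex vec" and U B1 B2 :: "complex mat"
    and p k \<nu> :: real
  assumes hn: "n \<ge> 2" and hn1: "1 \<le> n1" "n1 \<le> n - 1" and hn2: "n2 = n - n1"
    and hxi: "orthonormal_basis n xi"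
    and hU: "unitary_mat n U"
    and hB1: "B1 = proj_span n xi 1 n1 * U"
    and hB2: "B2 = proj_span n xi (n1 + 1) n * U"
    and hunital: "B1 * adj B1 + B2 * adj B2 = 1\<^sub>m n"
    and hp: "0 \<le> p" "p \<le> 1"
  shows
    "(\<forall>a\<in>{1..n}. \<forall>b\<in>{1..n}. a \<noteq> b \<longrightarrow>
        hs (gmoff n xi a b) (Lmap p B1 B2 k (k + \<nu>) (gm1 n)) = 0)
   \<and> hs (gm1 n) (Lmap p B1 B2 k (k + \<nu>) (gm1 n))
        = of_real (2 * real n2 * cos \<nu> / real n) + of_real ((real n1 - real n2) / real n) * omega \<nu>
   \<and> (\<forall>l\<in>{2..n1}. hs (gmdiag n xi l) (Lmap p B1 B2 k (k + \<nu>) (gm1 n)) = 0)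
   \<and> (\<forall>l\<in>{n1+1..n}. hs (gmdiag n xi l) (Lmap p B1 B2 k (k + \<nu>) (gm1 n))
        = of_real (2 * real n1) * \<i> * of_real (sin \<nu>) / of_real (sqrt (real n * real (l - 1) * real l)))
   \<and> hs (gm1 n) (Lmap p B1 B2 k (k + \<nu>) (gm1 n))
        = omega \<nu> - 2 * \<i> * of_real (sin \<nu>) * of_real (1 / sqrt (real n)) * tr (B2 * gm1 n * adj B2)
   \<and> (\<forall>l\<in>{2..n}. hs (gm1 n) (Lmap p B1 B2 k (k + \<nu>) (gmdiag n xi l))
        = - 2 * \<i> * of_real (sin \<nu>) * of_real (1 / sqrt (real n)) * tr (B2 * gmdiag n xi l * adj B2))
   \<and> (\<forall>a\<in>{1..n}. \<forall>b\<in>{1..n}. a \<noteq> b \<longrightarrow>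
        hs (gm1 n) (Lmap p B1 B2 k (k + \<nu>) (gmoff n xi a b))
        = - 2 * \<i> * of_real (sin \<nu>) * of_real (1 / sqrt (real n)) * tr (B2 * gmoff n xi a b * adj B2))
   \<and> hs (gm1 n) (Lmap p B1 B2 k k (gm1 n)) = 1
   \<and> (\<forall>l\<in>{2..n}. hs (gmdiag n xi l) (Lmap p B1 B2 k k (gm1 n)) = 0
                 \<and> hs (gm1 n) (Lmap p B1 B2 k k (gmdiag n xi l)) = 0)
   \<and> (\<forall>a\<in>{1..n}. \<forall>b\<in>{1..n}. a \<noteq> b \<longrightarrow>
        hs (gmoff n xi a b) (Lmap p B1 B2 k k (gm1 n)) = 0
        \<and> hs (gm1 n) (Lmap p B1 B2 k k (gmoff n xi a b)) = 0)"
  proof -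
  note H = hn hn1 hxi hU hB1 hB2 hunital
  have r1: "n1 \<le> n" using hn1 hn by auto
  show ?thesis
  proof (intro conjI)
    show "\<forall>a\<in>{1..n}. \<forall>b\<in>{1..n}. a \<noteq> b \<longrightarrow>
        hs (gmoff n xi a b) (Lmap p B1 B2 k (k + \<nu>) (gm1 n)) = 0"
      using it1[OF H] by blast
    show "hs (gm1 n) (Lmap p B1 B2 k (k + \<nu>) (gm1 n))
        = of_real (2 * real n2 * cos \<nu> / real n) + of_real ((real n1 - real n2) / real n) * omega \<nu>"
      unfolding hn2 by (rule it2[OF H])
    show "\<forall>l\<in>{2..n1}. hs (gmdiag n xi l) (Lmap p B1 B2 k (k + \<nu>) (gm1 n)) = 0"
      using it3[OF H] by blast
    show "\<forall>l\<in>{n1+1..n}. hs (gmdiag n xi l) (Lmap p B1 B2 k (k + \<nu>) (gm1 n))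
        = of_real (2 * real n1) * \<i> * of_real (sin \<nu>) / of_real (sqrt (real n * real (l - 1) * real l))"
      using it4[OF H] by blast
    show "hs (gm1 n) (Lmap p B1 B2 k (k + \<nu>) (gm1 n))
        = omega \<nu> - 2 * \<i> * of_real (sin \<nu>) * of_real (1 / sqrt (real n)) * tr (B2 * gm1 n * adj B2)"
      by (rule it5[OF H])
    show "\<forall>l\<in>{2..n}. hs (gm1 n) (Lmap p B1 B2 k (k + \<nu>) (gmdiag n xi l))
        = - 2 * \<i> * of_real (sin \<nu>) * of_real (1 / sqrt (real n)) * tr (B2 * gmdiag n xi l * adj B2)"
      using it6[OF H] by blast
    show "\<forall>a\<in>{1..n}. \<forall>b\<in>{1..n}. a \<noteq> b \<longrightarrow>
        hs (gm1 n) (Lmap p B1 B2 k (k + \<nu>) (gmoff n xi a b))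
        = - 2 * \<i> * of_real (sin \<nu>) * of_real (1 / sqrt (real n)) * tr (B2 * gmoff n xi a b * adj B2)"
      using it7[OF H] by blast
    have e2: "hs (gm1 n) (Lmap p B1 B2 k k (gm1 n))
        = of_real (2 * real (n - n1) * cos 0 / real n) + of_real ((real n1 - real (n - n1)) / real n) * omega 0"
      using it2[OF H, of p k 0] by simp
    have "(2 * real (n - n1) * cos 0 / real n) + ((real n1 - real (n - n1)) / real n) = 1"
      using hn r1 by (simp add: of_nat_diff field_simps)
    hence "complex_of_real (2 * real (n - n1) * cos 0 / real n) + complex_of_real ((real n1 - real (n - n1)) / real n) = 1"
      by (metis of_real_1 of_real_add)
    thus "hs (gm1 n) (Lmap p B1 B2 k k (gm1 n)) = 1"
      unfolding e2 by (simp add: omega_def)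
    show "\<forall>l\<in>{2..n}. hs (gmdiag n xi l) (Lmap p B1 B2 k k (gm1 n)) = 0
                 \<and> hs (gm1 n) (Lmap p B1 B2 k k (gmdiag n xi l)) = 0"
    proof
      fix l assume l: "l \<in> {2..n}"
      have a: "hs (gmdiag n xi l) (Lmap p B1 B2 k k (gm1 n)) = 0"
      proof (cases "l \<le> n1")
        case True thus ?thesis using it3[OF H, of l p k 0] l by simp
      next
        case False thus ?thesis using it4[OF H, of l p k 0] l by simp
      qed
      have b: "hs (gm1 n) (Lmap p B1 B2 k k (gmdiag n xi l)) = 0"
        using it6[OF H, of l p k 0] l by simp
      show "hs (gmdiag n xi l) (Lmap p B1 B2 k k (gm1 n)) = 0
                 \<and> hs (gm1 n) (Lmap p B1 B2 k k (gmdiag n xi l)) = 0" using a b by blast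
    qed
    show "\<forall>a\<in>{1..n}. \<forall>b\<in>{1..n}. a \<noteq> b \<longrightarrow>
        hs (gmoff n xi a b) (Lmap p B1 B2 k k (gm1 n)) = 0
        \<and> hs (gm1 n) (Lmap p B1 B2 k k (gmoff n xi a b)) = 0"
      using it1[OF H, of _ _ p k 0] it7[OF H, of _ _ p k 0] by simp
  qed
qed

end
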